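(* Let $H=\sum_{i,j=1}^n\left(\tfrac12\mu_{ij}p_ip_j+\tfrac12\kappa_{ij}q_iq_j+\tfrac12\gamma_{ij}p_iq_j+\tfrac12\gamma_{ji}q_ip_j\right)$ with $\mu,\kappa$ real symmetric, $\gamma$ real, and Hermitian $p_i,q_i$ satisfying $[p_i,q_j]=-i\delta_{ij}$, $[p_i,p_j]=[q_i,q_j]=0$. If $H$ is Dirac diagonalizable, then its dynamic matrix $D=\Sigma_yM$ is physically diagonalizable.
   Context: $M=\begin{pmatrix}\mu&\gamma\\ \gamma^T&\kappa\end{pmatrix}$, $\Sigma_y=\begin{pmatrix}0&-iI_n\\ iI_n&0\end{pmatrix}$. $H$ is Dirac diagonalizable if there exist operators $d_1,\dots,d_n$, each a complex linear combination of the $p_i,q_i$, with $[d_i,d_j^\dagger]=\delta_{ij}$, $[d_i,d_j]=0$, and real $\omega_1,\dots,\omega_n,C$ with $H=\sum_i\omega_id_i^\dagger d_i+C$. A matrix is physically diagonalizable if it is diagonalizable over $\mathbb{C}$ and all its eigenvalues are real. *)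

theory Defs
  imports Complex_Main "Jordan_Normal_Form.Char_Poly"
begin

text \<open>Abstract complex unital *-algebra of operators: the ring 'a (with 1 \<noteq> 0),
  an embedding emb of complex scalars as central elements, and an involution st (adjoint).\<close>
definition star_algebra :: "(complex \<Rightarrow> 'a::ring_1) \<Rightarrow> ('a \<Rightarrow> 'a) \<Rightarrow> bool" where
  "star_algebra emb st \<longleftrightarrow>
     (\<forall>x y. emb (x + y) = emb x + emb y) \<and> (\<forall>x y. emb (x * y) = emb x * emb y) \<and> emb 1 = 1 \<and>
     (\<forall>c x. emb c * x = x * emb c) \<and>
     (\<forall>x y. st (x + y) = st x + st y) \<and> (\<forall>x y. st (x * y) = st y * st x) \<and>
     (\<forall>x. st (st x) = x) \<and> (\<forall>c. st (emb c) = emb (cnj c))"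

definition comm :: "'a::ring \<Rightarrow> 'a \<Rightarrow> 'a" where
  "comm x y = x * y - y * x"

definition ccr :: "nat \<Rightarrow> (complex \<Rightarrow> 'a::ring_1) \<Rightarrow> ('a \<Rightarrow> 'a) \<Rightarrow> (nat \<Rightarrow> 'a) \<Rightarrow> (nat \<Rightarrow> 'a) \<Rightarrow> bool" where
  "ccr n emb st p q \<longleftrightarrow>
     (\<forall>i<n. st (p i) = p i \<and> st (q i) = q i) \<and>
     (\<forall>i<n. \<forall>j<n. comm (p i) (q j) = emb (- \<i> * (if i = j then 1 else 0)) \<and>
                   comm (p i) (p j) = 0 \<and> comm (q i) (q j) = 0)"

definition hamiltonian :: "nat \<Rightarrow> (complex \<Rightarrow> 'a::ring_1) \<Rightarrow> (nat \<Rightarrow> 'a) \<Rightarrow> (nat \<Rightarrow> 'a)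
    \<Rightarrow> (nat \<Rightarrow> nat \<Rightarrow> real) \<Rightarrow> (nat \<Rightarrow> nat \<Rightarrow> real) \<Rightarrow> (nat \<Rightarrow> nat \<Rightarrow> real) \<Rightarrow> 'a" where
  "hamiltonian n emb p q \<mu> \<kappa> \<gamma> =
     (\<Sum>i<n. \<Sum>j<n. emb (of_real (\<mu> i j / 2)) * p i * p j + emb (of_real (\<kappa> i j / 2)) * q i * q j
        + emb (of_real (\<gamma> i j / 2)) * p i * q j + emb (of_real (\<gamma> j i / 2)) * q i * p j)"

definition dirac_diagonalizable :: "nat \<Rightarrow> (complex \<Rightarrow> 'a::ring_1) \<Rightarrow> ('a \<Rightarrow> 'a) \<Rightarrow> (nat \<Rightarrow> 'a) \<Rightarrow> (nat \<Rightarrow> 'a) \<Rightarrow> 'a \<Rightarrow> bool" where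
  "dirac_diagonalizable n emb st p q H \<longleftrightarrow>
     (\<exists>(d :: nat \<Rightarrow> 'a) (\<omega> :: nat \<Rightarrow> real) (C :: real).
        (\<forall>i<n. \<exists>a b :: nat \<Rightarrow> complex. d i = (\<Sum>k<n. emb (a k) * p k + emb (b k) * q k)) \<and>
        (\<forall>i<n. \<forall>j<n. comm (d i) (st (d j)) = emb (if i = j then 1 else 0) \<and> comm (d i) (d j) = 0) \<and>
        H = (\<Sum>i<n. emb (of_real (\<omega> i)) * st (d i) * d i) + emb (of_real C))"

text \<open>M = [[mu, gamma],[gamma^T, kappa]] as a complex 2n x 2n matrix.\<close>
definition coeff_matrix :: "nat \<Rightarrow> (nat \<Rightarrow> nat \<Rightarrow> real) \<Rightarrow> (nat \<Rightarrow> nat \<Rightarrow> real) \<Rightarrow> (nat \<Rightarrow> nat \<Rightarrow> real) \<Rightarrow> complex mat" where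
  "coeff_matrix n \<mu> \<kappa> \<gamma> = mat (2*n) (2*n) (\<lambda>(r, s).
     of_real (if r < n \<and> s < n then \<mu> r s
      else if r < n then \<gamma> r (s - n)
      else if s < n then \<gamma> s (r - n)
      else \<kappa> (r - n) (s - n)))"

text \<open>Sigma_y = [[0, -i I],[i I, 0]].\<close>
definition sigma_y :: "nat \<Rightarrow> complex mat" where
  "sigma_y n = mat (2*n) (2*n) (\<lambda>(r, s).
     if r < n \<and> n \<le> s \<and> s - n = r then - \<i>
     else if n \<le> r \<and> s < n \<and> r - n = s then \<i> else 0)"

definition dynamic_matrix :: "nat \<Rightarrow> (nat \<Rightarrow> nat \<Rightarrow> real) \<Rightarrow> (nat \<Rightarrow> nat \<Rightarrow> real) \<Rightarrow> (nat \<Rightarrow> nat \<Rightarrow> real) \<Rightarrow> complex mat" where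
  "dynamic_matrix n \<mu> \<kappa> \<gamma> = sigma_y n * coeff_matrix n \<mu> \<kappa> \<gamma>"

definition phys_diagonalizable :: "complex mat \<Rightarrow> bool" where
  "phys_diagonalizable A \<longleftrightarrow>
     (\<exists>B. diagonal_mat B \<and> similar_mat A B) \<and> (\<forall>k. eigenvalue A k \<longrightarrow> k \<in> \<real>)"

end

theory Submission
  imports Defs
begin

locale ccr_setup =
  fixes n :: nat and emb :: "complex \<Rightarrow> 'a::ring_1" and st :: "'a \<Rightarrow> 'a" and p q :: "nat \<Rightarrow> 'a"
  assumes sa: "star_algebra emb st" and cc: "ccr n emb st p q"
begin

lemma emb_add: "emb (x + y) = emb x + emb y" using sa unfolding star_algebra_def by blast
lemma emb_mult: "emb (x * y) = emb x * emb y" using sa unfolding star_algebra_def by blast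
lemma emb_1: "emb 1 = 1" using sa unfolding star_algebra_def by blast
lemma emb_central: "emb c * x = x * emb c" using sa unfolding star_algebra_def by blast
lemma st_add: "st (x + y) = st x + st y" using sa unfolding star_algebra_def by blast
lemma st_mult: "st (x * y) = st y * st x" using sa unfolding star_algebra_def by blast
lemma st_st: "st (st x) = x" using sa unfolding star_algebra_def by blast
lemma st_emb: "st (emb c) = emb (cnj c)" using sa unfolding star_algebra_def by blast

lemma emb_0: "emb 0 = 0"
  using emb_add[of 0 0] by simp
lemma emb_neg: "emb (- x) = - emb x"
proof -
  have "emb x + emb (-x) = 0" using emb_add[of x "-x"] emb_0 by simp
  thus ?thesis by (metis minus_unique)
qed
lemma emb_diff: "emb (x - y) = emb x - emb y"
  using emb_add[of x "-y"] emb_neg by simp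
lemma emb_sum: "emb (sum f A) = sum (\<lambda>i. emb (f i)) A"
  by (induction A rule: infinite_finite_induct) (auto simp: emb_0 emb_add)
lemma emb_inj: assumes "emb x = emb y" shows "x = y"
proof (rule ccontr)
  assume "x \<noteq> y"
  hence "(x - y) * (1 / (x - y)) = 1" by simp
  hence "emb (x - y) * emb (1 / (x - y)) = 1" by (metis emb_1 emb_mult)
  moreover have "emb (x - y) = 0" using assms emb_diff by simp
  ultimately show False by simp
qed

lemma st_0: "st 0 = 0"
  using st_add[of 0 0] by simp
lemma st_neg: "st (- x) = - st x"
proof -
  have "st x + st (-x) = 0" using st_add[of x "-x"] st_0 by simp
  thus ?thesis by (metis minus_unique)
qed
lemma st_diff: "st (x - y) = st x - st y"
  using st_add[of x "-y"] st_neg by simp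
lemma st_sum: "st (sum f A) = sum (\<lambda>i. st (f i)) A"
  by (induction A rule: infinite_finite_induct) (auto simp: st_0 st_add)

lemma comm_add_left: "comm (a + b) x = comm a x + comm b x"
  unfolding comm_def by (simp add: algebra_simps)
lemma comm_add_right: "comm x (a + b) = comm x a + comm x b"
  unfolding comm_def by (simp add: algebra_simps)
lemma comm_0_left: "comm 0 x = 0" unfolding comm_def by simp
lemma comm_0_right: "comm x 0 = 0" unfolding comm_def by simp
lemma comm_sum_left: "comm (sum f A) x = sum (\<lambda>i. comm (f i) x) A"
  by (induction A rule: infinite_finite_induct) (simp_all add: comm_add_left comm_0_left)
lemma comm_sum_right: "comm x (sum f A) = sum (\<lambda>i. comm x (f i)) A"
  by (induction A rule: infinite_finite_induct) (simp_all add: comm_add_right comm_0_right)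
lemma comm_mult_left: "comm (a * b) x = a * comm b x + comm a x * b"
  unfolding comm_def by (simp add: algebra_simps)
lemma comm_antisym: "comm a b = - comm b a"
  unfolding comm_def by simp
lemma comm_emb_left: "comm (emb c * a) x = emb c * comm a x"
proof -
  have "x * (emb c * a) = emb c * (x * a)" by (metis emb_central mult.assoc)
  thus ?thesis unfolding comm_def by (simp add: right_diff_distrib mult.assoc)
qed
lemma comm_emb_right: "comm x (emb c * a) = emb c * comm x a"
proof -
  have "x * (emb c * a) = emb c * (x * a)" by (metis emb_central mult.assoc)
  thus ?thesis unfolding comm_def by (simp add: right_diff_distrib mult.assoc)
qed
lemma comm_emb: "comm (emb c) x = 0"
  unfolding comm_def using emb_central[of c x] by simp
lemma comm_st: "st (comm a b) = comm (st b) (st a)"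
  unfolding comm_def by (simp add: st_diff st_mult)

definition z :: "nat \<Rightarrow> 'a" where "z r = (if r < n then p r else q (r - n))"
definition sy :: "nat \<Rightarrow> nat \<Rightarrow> complex" where
  "sy r s = (if r < n \<and> n \<le> s \<and> s - n = r then - \<i>
     else if n \<le> r \<and> s < n \<and> r - n = s then \<i> else 0)"

lemma z_herm: "r < 2*n \<Longrightarrow> st (z r) = z r"
  using cc unfolding ccr_def z_def by auto

lemma comm_z: assumes "r < 2*n" "s < 2*n" shows "comm (z r) (z s) = emb (sy r s)"
proof -
  have C: "\<forall>i<n. \<forall>j<n. comm (p i) (q j) = emb (- \<i> * (if i = j then 1 else 0)) \<and>
                   comm (p i) (p j) = 0 \<and> comm (q i) (q j) = 0" using cc unfolding ccr_def by blast
  show ?thesis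
  proof (cases "r < n")
    case True
    then show ?thesis
    proof (cases "s < n")
      case True thus ?thesis using C \<open>r<n\<close> by (simp add: z_def sy_def emb_0)
    next
      case False thus ?thesis using C[rule_format, of r "s-n"] \<open>r<n\<close> assms
        by (auto simp: z_def sy_def emb_0)
    qed
  next
    case False
    then show ?thesis
    proof (cases "s < n")
      case True
      have "comm (q (r-n)) (p s) = - comm (p s) (q (r - n))" by (rule comm_antisym)
      thus ?thesis using C[rule_format, of s "r-n"] \<open>\<not> r<n\<close> True assms
        by (auto simp: z_def sy_def emb_0 emb_neg)
    next
      case False thus ?thesis using C[rule_format, of "r-n" "s-n"] \<open>\<not> r<n\<close> assms
        by (auto simp: z_def sy_def emb_0)
    qed
  qed
qed


definition lin :: "(nat \<Rightarrow> complex) \<Rightarrow> 'a" where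
  "lin w = (\<Sum>r\<in>{0..<2*n}. emb (w r) * z r)"
definition tau :: "(nat \<Rightarrow> complex) \<Rightarrow> nat \<Rightarrow> complex" where
  "tau w s = (\<Sum>t\<in>{0..<2*n}. sy s t * w t)"

lemma comm_z_lin: assumes "s < 2*n" shows "comm (z s) (lin w) = emb (tau w s)"
proof -
  have "comm (z s) (lin w) = (\<Sum>t\<in>{0..<2*n}. emb (w t) * comm (z s) (z t))"
    unfolding lin_def comm_sum_right comm_emb_right ..
  also have "\<dots> = (\<Sum>t\<in>{0..<2*n}. emb (sy s t * w t))"
  proof (rule sum.cong)
    fix t assume "t \<in> {0..<2*n}"
    hence "comm (z s) (z t) = emb (sy s t)" using assms comm_z by simp
    thus "emb (w t) * comm (z s) (z t) = emb (sy s t * w t)" by (simp add: emb_mult[symmetric] mult.commute)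
  qed simp
  finally show ?thesis unfolding tau_def emb_sum .
qed

lemma comm_lin_lin: "comm (lin w) (lin w') = emb (\<Sum>r\<in>{0..<2*n}. w r * tau w' r)"
proof -
  have "comm (lin w) (lin w') = (\<Sum>r\<in>{0..<2*n}. emb (w r) * comm (z r) (lin w'))"
    unfolding lin_def[of w] comm_sum_left comm_emb_left ..
  also have "\<dots> = (\<Sum>r\<in>{0..<2*n}. emb (w r * tau w' r))"
    by (rule sum.cong) (auto simp: comm_z_lin emb_mult)
  finally show ?thesis unfolding emb_sum .
qed

lemma st_lin: "st (lin w) = lin (\<lambda>r. cnj (w r))"
  unfolding lin_def st_sum
  by (rule sum.cong) (auto simp: st_mult st_emb z_herm emb_central[of _ "z _", symmetric])

lemma emb_lin: "emb c * lin w = lin (\<lambda>r. c * w r)"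
  unfolding lin_def sum_distrib_left
  by (rule sum.cong) (auto simp: emb_mult mult.assoc)

lemma tau_eval: assumes "s < 2*n"
  shows "tau w s = (if s < n then - \<i> * w (s + n) else \<i> * w (s - n))"
proof (cases "s < n")
  case True
  have "tau w s = (\<Sum>t\<in>{0..<2*n}. if t = s + n then - \<i> * w t else 0)"
    unfolding tau_def
  proof (rule sum.cong)
    fix t assume "t \<in> {0..<2*n}"
    thus "sy s t * w t = (if t = s + n then - \<i> * w t else 0)"
      using True by (cases "t = s + n") (auto simp: sy_def)
  qed simp
  also have "\<dots> = - \<i> * w (s + n)" using True by (simp add: sum.delta)
  finally show ?thesis using True by simp
next
  case False
  have "tau w s = (\<Sum>t\<in>{0..<2*n}. if t = s - n then \<i> * w t else 0)"
    unfolding tau_def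
  proof (rule sum.cong)
    fix t assume "t \<in> {0..<2*n}"
    thus "sy s t * w t = (if t = s - n then \<i> * w t else 0)"
      using False assms by (cases "t = s - n") (auto simp: sy_def)
  qed simp
  also have "\<dots> = \<i> * w (s - n)" using False assms by (simp add: sum.delta)
  finally show ?thesis using False by simp
qed

lemma lin_inj: assumes "lin w = lin w'" "r < 2*n" shows "w r = w' r"
proof (cases "r < n")
  case True
  have "comm (z (r+n)) (lin w) = comm (z (r+n)) (lin w')" using assms by simp
  moreover have "r + n < 2*n" using True by simp
  ultimately have "emb (tau w (r+n)) = emb (tau w' (r+n))" by (simp add: comm_z_lin)
  hence "tau w (r+n) = tau w' (r+n)" by (rule emb_inj)
  moreover have "tau w (r+n) = \<i> * w r" using tau_eval[of "r+n" w] True by simp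
  moreover have "tau w' (r+n) = \<i> * w' r" using tau_eval[of "r+n" w'] True by simp
  ultimately have "\<i> * w r = \<i> * w' r" by metis
  thus ?thesis by simp
next
  case False
  have "comm (z (r-n)) (lin w) = comm (z (r-n)) (lin w')" using assms by simp
  moreover have "r - n < 2*n" using assms by simp
  ultimately have "emb (tau w (r-n)) = emb (tau w' (r-n))" by (simp add: comm_z_lin)
  hence "tau w (r-n) = tau w' (r-n)" by (rule emb_inj)
  moreover have "tau w (r-n) = - \<i> * w r"
  proof -
    have "r - n < n" "r - n + n = r" using False assms by auto
    thus ?thesis using tau_eval[of "r-n" w] by simp
  qed
  moreover have "tau w' (r-n) = - \<i> * w' r"
  proof -
    have "r - n < n" "r - n + n = r" using False assms by auto
    thus ?thesis using tau_eval[of "r-n" w'] by simp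
  qed
  ultimately have "- \<i> * w r = - \<i> * w' r" by metis
  thus ?thesis by simp
qed

lemma sum_split2: "sum f {0..<2*n} = sum f {0..<n} + (\<Sum>k\<in>{0..<n}. f (k + n))"
proof -
  have "sum f {0..<2*n} = sum f {0..<n} + sum f {n..<2*n}"
    by (rule sum.atLeastLessThan_concat[symmetric]) auto
  also have "sum f {n..<2*n} = (\<Sum>k\<in>{0..<n}. f (k + n))"
    using sum.shift_bounds_nat_ivl[of f 0 n n] by (simp add: mult_2)
  finally show ?thesis .
qed

lemma lin_split: "lin w = (\<Sum>k\<in>{0..<n}. emb (w k) * p k + emb (w (k + n)) * q k)"
  unfolding lin_def sum_split2 sum.distrib by (simp add: z_def)

definition Mr :: "(nat \<Rightarrow> nat \<Rightarrow> real) \<Rightarrow> (nat \<Rightarrow> nat \<Rightarrow> real) \<Rightarrow> (nat \<Rightarrow> nat \<Rightarrow> real) \<Rightarrow> nat \<Rightarrow> nat \<Rightarrow> real" where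
  "Mr \<mu> \<kappa> \<gamma> r s = (if r < n \<and> s < n then \<mu> r s
      else if r < n then \<gamma> r (s - n)
      else if s < n then \<gamma> s (r - n)
      else \<kappa> (r - n) (s - n))"

lemma ham_z: "hamiltonian n emb p q \<mu> \<kappa> \<gamma> =
   (\<Sum>r\<in>{0..<2*n}. \<Sum>s\<in>{0..<2*n}. emb (of_real (Mr \<mu> \<kappa> \<gamma> r s / 2)) * z r * z s)"
proof -
  define F where "F r s = emb (of_real (Mr \<mu> \<kappa> \<gamma> r s / 2)) * z r * z s" for r s
  have "(\<Sum>r\<in>{0..<2*n}. \<Sum>s\<in>{0..<2*n}. F r s) =
     (\<Sum>i\<in>{0..<n}. \<Sum>j\<in>{0..<n}. F i j + F i (j+n) + F (i+n) j + F (i+n) (j+n))"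
  proof -
    have "(\<Sum>r\<in>{0..<2*n}. \<Sum>s\<in>{0..<2*n}. F r s) = (\<Sum>r\<in>{0..<2*n}. \<Sum>j\<in>{0..<n}. F r j + F r (j+n))"
    proof (rule sum.cong)
      fix r show "(\<Sum>s\<in>{0..<2*n}. F r s) = (\<Sum>j\<in>{0..<n}. F r j + F r (j+n))"
        unfolding sum_split2[of "F r"] sum.distrib ..
    qed simp
    also have "\<dots> = (\<Sum>i\<in>{0..<n}. (\<Sum>j\<in>{0..<n}. F i j + F i (j+n)) + (\<Sum>j\<in>{0..<n}. F (i+n) j + F (i+n) (j+n)))"
      unfolding sum_split2[of "\<lambda>r. \<Sum>j\<in>{0..<n}. F r j + F r (j+n)"] unfolding sum.distrib ..
    also have "\<dots> = (\<Sum>i\<in>{0..<n}. \<Sum>j\<in>{0..<n}. F i j + F i (j+n) + F (i+n) j + F (i+n) (j+n))"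
      by (intro sum.cong refl) (simp add: sum.distrib add.assoc)
    finally show ?thesis .
  qed
  also have "\<dots> = hamiltonian n emb p q \<mu> \<kappa> \<gamma>"
    unfolding hamiltonian_def lessThan_atLeast0
  proof (intro sum.cong refl)
    fix i j assume "i \<in> {0..<n}" "j \<in> {0..<n}"
    show "F i j + F i (j+n) + F (i+n) j + F (i+n) (j+n) =
      emb (of_real (\<mu> i j / 2)) * p i * p j + emb (of_real (\<kappa> i j / 2)) * q i * q j
        + emb (of_real (\<gamma> i j / 2)) * p i * q j + emb (of_real (\<gamma> j i / 2)) * q i * p j"
    proof -
      have 1: "F i j = emb (of_real (\<mu> i j / 2)) * p i * p j" using \<open>i \<in> _\<close> \<open>j \<in> _\<close> by (simp add: F_def z_def Mr_def)
      have 2: "F i (j+n) = emb (of_real (\<gamma> i j / 2)) * p i * q j" using \<open>i \<in> _\<close> \<open>j \<in> _\<close> by (simp add: F_def z_def Mr_def)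
      have 3: "F (i+n) j = emb (of_real (\<gamma> j i / 2)) * q i * p j" using \<open>i \<in> _\<close> \<open>j \<in> _\<close> by (simp add: F_def z_def Mr_def)
      have 4: "F (i+n) (j+n) = emb (of_real (\<kappa> i j / 2)) * q i * q j" using \<open>i \<in> _\<close> \<open>j \<in> _\<close> by (simp add: F_def z_def Mr_def)
      show ?thesis unfolding 1 2 3 4 by (simp only: add.assoc add.left_commute add.commute)
    qed
  qed
  finally show ?thesis unfolding F_def by (rule sym)
qed

lemma Mr_sym: assumes "\<forall>i<n. \<forall>j<n. \<mu> i j = \<mu> j i" "\<forall>i<n. \<forall>j<n. \<kappa> i j = \<kappa> j i"
  "r < 2*n" "s < 2*n"
  shows "Mr \<mu> \<kappa> \<gamma> r s = Mr \<mu> \<kappa> \<gamma> s r"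
  using assms by (auto simp: Mr_def)

lemma comm_term: assumes "r < 2*n" "s < 2*n"
  shows "comm (emb c * z r * z s) (lin w) = emb (c * tau w s) * z r + emb (c * tau w r) * z s"
proof -
  have "comm (emb c * z r * z s) (lin w) = (emb c * z r) * comm (z s) (lin w) + comm (emb c * z r) (lin w) * z s"
    by (rule comm_mult_left)
  also have "\<dots> = emb c * (z r * emb (tau w s)) + emb c * emb (tau w r) * z s"
    using assms by (simp add: comm_z_lin comm_emb_left mult.assoc)
  also have "z r * emb (tau w s) = emb (tau w s) * z r" by (rule emb_central[symmetric])
  finally show ?thesis by (simp add: emb_mult mult.assoc)
qed

lemma comm_ham_lin:
  assumes "\<forall>i<n. \<forall>j<n. \<mu> i j = \<mu> j i" "\<forall>i<n. \<forall>j<n. \<kappa> i j = \<kappa> j i"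
  shows "comm (hamiltonian n emb p q \<mu> \<kappa> \<gamma>) (lin w) =
    lin (\<lambda>r. \<Sum>s\<in>{0..<2*n}. of_real (Mr \<mu> \<kappa> \<gamma> r s) * tau w s)"
proof -
  define c where "c r s = (of_real (Mr \<mu> \<kappa> \<gamma> r s / 2) :: complex)" for r s
  define A where "A r s = emb (c r s * tau w s) * z r" for r s
  have csym: "c r s = c s r" if "r < 2*n" "s < 2*n" for r s
    unfolding c_def using Mr_sym[OF assms that] by simp
  have "comm (hamiltonian n emb p q \<mu> \<kappa> \<gamma>) (lin w) =
     (\<Sum>r\<in>{0..<2*n}. \<Sum>s\<in>{0..<2*n}. comm (emb (c r s) * z r * z s) (lin w))"
    unfolding ham_z comm_sum_left c_def by simp
  also have "\<dots> = (\<Sum>r\<in>{0..<2*n}. \<Sum>s\<in>{0..<2*n}. A r s + emb (c r s * tau w r) * z s)"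
    unfolding A_def by (intro sum.cong refl) (simp add: comm_term)
  also have "\<dots> = (\<Sum>r\<in>{0..<2*n}. \<Sum>s\<in>{0..<2*n}. A r s) + (\<Sum>r\<in>{0..<2*n}. \<Sum>s\<in>{0..<2*n}. emb (c r s * tau w r) * z s)"
    by (simp add: sum.distrib)
  also have "(\<Sum>r\<in>{0..<2*n}. \<Sum>s\<in>{0..<2*n}. emb (c r s * tau w r) * z s)
      = (\<Sum>s\<in>{0..<2*n}. \<Sum>r\<in>{0..<2*n}. emb (c r s * tau w r) * z s)"
    by (rule sum.swap)
  also have "\<dots> = (\<Sum>r\<in>{0..<2*n}. \<Sum>s\<in>{0..<2*n}. A r s)"
    unfolding A_def by (intro sum.cong refl) (simp add: csym)
  also have "(\<Sum>r\<in>{0..<2*n}. \<Sum>s\<in>{0..<2*n}. A r s) + (\<Sum>r\<in>{0..<2*n}. \<Sum>s\<in>{0..<2*n}. A r s)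
     = (\<Sum>r\<in>{0..<2*n}. emb (\<Sum>s\<in>{0..<2*n}. of_real (Mr \<mu> \<kappa> \<gamma> r s) * tau w s) * z r)"
    unfolding sum.distrib[of "\<lambda>r. \<Sum>s\<in>{0..<2*n}. A r s" "\<lambda>r. \<Sum>s\<in>{0..<2*n}. A r s", symmetric]
  proof (rule sum.cong[OF refl])
    fix r
    have "(\<Sum>s\<in>{0..<2*n}. A r s) + (\<Sum>s\<in>{0..<2*n}. A r s) = (\<Sum>s\<in>{0..<2*n}. emb (c r s * tau w s + c r s * tau w s)) * z r"
      unfolding A_def sum_distrib_right[symmetric] emb_add by (simp add: sum.distrib distrib_right)
    also have "\<dots> = emb (\<Sum>s\<in>{0..<2*n}. of_real (Mr \<mu> \<kappa> \<gamma> r s) * tau w s) * z r"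
      unfolding emb_sum[symmetric] c_def by (simp add: algebra_simps)
    finally show "(\<Sum>s\<in>{0..<2*n}. A r s) + (\<Sum>s\<in>{0..<2*n}. A r s) = emb (\<Sum>s\<in>{0..<2*n}. of_real (Mr \<mu> \<kappa> \<gamma> r s) * tau w s) * z r" .
  qed
  finally show ?thesis unfolding lin_def .
qed

lemma comm_H_d:
  assumes rel: "\<forall>i<n. \<forall>j<n. comm (d i) (st (d j)) = emb (if i = j then 1 else 0) \<and> comm (d i) (d j) = 0"
    and H: "H = (\<Sum>i<n. emb (of_real (\<omega> i)) * st (d i) * d i) + emb (of_real C)"
    and j: "j < n"
  shows "comm H (d j) = emb (- of_real (\<omega> j)) * d j"
    and "comm H (st (d j)) = emb (of_real (\<omega> j)) * st (d j)"
proof -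
  have t1: "comm (emb (of_real (\<omega> i)) * st (d i) * d i) (d j) =
      (if i = j then emb (- of_real (\<omega> j)) * d j else 0)" if "i < n" for i
  proof -
    have "comm (emb (of_real (\<omega> i)) * st (d i) * d i) (d j) =
      emb (of_real (\<omega> i)) * st (d i) * comm (d i) (d j) + emb (of_real (\<omega> i)) * comm (st (d i)) (d j) * d i"
      by (simp only: mult.assoc comm_emb_left comm_mult_left distrib_left comm_emb mult_zero_left add_0_right)
    also have "comm (d i) (d j) = 0" using rel that j by blast
    also have "comm (st (d i)) (d j) = - emb (if j = i then 1 else 0)"
      using rel that j comm_antisym by metis
    finally show ?thesis by (auto simp: emb_neg emb_0 emb_1)
  qed
  have t2: "comm (emb (of_real (\<omega> i)) * st (d i) * d i) (st (d j)) =
      (if i = j then emb (of_real (\<omega> j)) * st (d j) else 0)" if "i < n" for i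
  proof -
    have "comm (emb (of_real (\<omega> i)) * st (d i) * d i) (st (d j)) =
      emb (of_real (\<omega> i)) * st (d i) * comm (d i) (st (d j)) + emb (of_real (\<omega> i)) * comm (st (d i)) (st (d j)) * d i"
      by (simp only: mult.assoc comm_emb_left comm_mult_left distrib_left comm_emb mult_zero_left add_0_right)
    also have "comm (d i) (st (d j)) = emb (if i = j then 1 else 0)" using rel that j by blast
    also have "comm (st (d i)) (st (d j)) = 0"
      using rel that j comm_st[of "d j" "d i"] st_0 by metis
    finally have "comm (emb (of_real (\<omega> i)) * st (d i) * d i) (st (d j)) =
      emb (of_real (\<omega> i)) * st (d i) * emb (if i = j then 1 else 0)" by simp
    thus ?thesis by (auto simp: emb_1 emb_0)
  qed
  show "comm H (d j) = emb (- of_real (\<omega> j)) * d j"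
    unfolding H comm_add_left comm_emb comm_sum_left using t1 j by (simp add: sum.delta)
  show "comm H (st (d j)) = emb (of_real (\<omega> j)) * st (d j)"
    unfolding H comm_add_left comm_emb comm_sum_left using t2 j by (simp add: sum.delta)
qed

definition sig :: "(nat \<Rightarrow> complex) \<Rightarrow> (nat \<Rightarrow> complex) \<Rightarrow> complex" where
  "sig x y = (\<Sum>r\<in>{0..<2*n}. x r * tau y r)"

lemma comm_lin_sig: "comm (lin x) (lin y) = emb (sig x y)"
  unfolding sig_def by (rule comm_lin_lin)

lemma key:
  assumes sm: "\<forall>i<n. \<forall>j<n. \<mu> i j = \<mu> j i" and sk: "\<forall>i<n. \<forall>j<n. \<kappa> i j = \<kappa> j i"
    and dd: "dirac_diagonalizable n emb st p q (hamiltonian n emb p q \<mu> \<kappa> \<gamma>)"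
  shows "\<exists>(V :: nat \<Rightarrow> nat \<Rightarrow> complex) (\<omega> :: nat \<Rightarrow> real).
    (\<forall>j<n. \<forall>r<2*n. (\<Sum>s\<in>{0..<2*n}. of_real (Mr \<mu> \<kappa> \<gamma> r s) * tau (V j) s) = - of_real (\<omega> j) * V j r
         \<and> (\<Sum>s\<in>{0..<2*n}. of_real (Mr \<mu> \<kappa> \<gamma> r s) * tau (\<lambda>t. cnj (V j t)) s) = of_real (\<omega> j) * cnj (V j r))
    \<and> (\<forall>i<n. \<forall>j<n. sig (V i) (\<lambda>t. cnj (V j t)) = (if i = j then 1 else 0)
         \<and> sig (V i) (V j) = 0 \<and> sig (\<lambda>t. cnj (V i t)) (\<lambda>t. cnj (V j t)) = 0
         \<and> sig (\<lambda>t. cnj (V i t)) (V j) = - (if i = j then 1 else 0))"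
proof -
  let ?H = "hamiltonian n emb p q \<mu> \<kappa> \<gamma>"
  obtain d \<omega> C where
    dlin: "\<forall>i<n. \<exists>a b :: nat \<Rightarrow> complex. d i = (\<Sum>k<n. emb (a k) * p k + emb (b k) * q k)" and
    rel: "\<forall>i<n. \<forall>j<n. comm (d i) (st (d j)) = emb (if i = j then 1 else 0) \<and> comm (d i) (d j) = 0" and
    H: "?H = (\<Sum>i<n. emb (of_real (\<omega> i)) * st (d i) * d i) + emb (of_real C)"
    using dd unfolding dirac_diagonalizable_def by blast
  from dlin obtain a b where ab: "\<forall>i<n. d i = (\<Sum>k<n. emb (a i k) * p k + emb (b i k) * q k)"
    by metis
  define V where "V i r = (if r < n then a i r else b i (r - n))" for i r
  have dV: "d i = lin (V i)" if "i < n" for i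
    unfolding lin_split ab[rule_format, OF that] lessThan_atLeast0 V_def by simp
  have sdV: "st (d i) = lin (\<lambda>t. cnj (V i t))" if "i < n" for i
    using dV[OF that] st_lin by simp
  have ev: "(\<Sum>s\<in>{0..<2*n}. of_real (Mr \<mu> \<kappa> \<gamma> r s) * tau (V j) s) = - of_real (\<omega> j) * V j r
         \<and> (\<Sum>s\<in>{0..<2*n}. of_real (Mr \<mu> \<kappa> \<gamma> r s) * tau (\<lambda>t. cnj (V j t)) s) = of_real (\<omega> j) * cnj (V j r)"
    if "j < n" "r < 2*n" for j r
  proof
    have "lin (\<lambda>r. \<Sum>s\<in>{0..<2*n}. of_real (Mr \<mu> \<kappa> \<gamma> r s) * tau (V j) s) = comm ?H (d j)"
      using comm_ham_lin[OF sm sk] dV[OF that(1)] by simp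
    also have "\<dots> = emb (- of_real (\<omega> j)) * d j" by (rule comm_H_d(1)[OF rel H that(1)])
    also have "\<dots> = lin (\<lambda>r. - of_real (\<omega> j) * V j r)" using dV[OF that(1)] emb_lin by simp
    finally show "(\<Sum>s\<in>{0..<2*n}. of_real (Mr \<mu> \<kappa> \<gamma> r s) * tau (V j) s) = - of_real (\<omega> j) * V j r"
      using lin_inj that(2) by blast
  next
    have "lin (\<lambda>r. \<Sum>s\<in>{0..<2*n}. of_real (Mr \<mu> \<kappa> \<gamma> r s) * tau (\<lambda>t. cnj (V j t)) s) = comm ?H (st (d j))"
      using comm_ham_lin[OF sm sk] sdV[OF that(1)] by simp
    also have "\<dots> = emb (of_real (\<omega> j)) * st (d j)" by (rule comm_H_d(2)[OF rel H that(1)])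
    also have "\<dots> = lin (\<lambda>r. of_real (\<omega> j) * cnj (V j r))" using sdV[OF that(1)] emb_lin by simp
    finally show "(\<Sum>s\<in>{0..<2*n}. of_real (Mr \<mu> \<kappa> \<gamma> r s) * tau (\<lambda>t. cnj (V j t)) s) = of_real (\<omega> j) * cnj (V j r)"
      using lin_inj that(2) by blast
  qed
  have gram: "sig (V i) (\<lambda>t. cnj (V j t)) = (if i = j then 1 else 0)
         \<and> sig (V i) (V j) = 0 \<and> sig (\<lambda>t. cnj (V i t)) (\<lambda>t. cnj (V j t)) = 0
         \<and> sig (\<lambda>t. cnj (V i t)) (V j) = - (if i = j then 1 else 0)" if "i < n" "j < n" for i j
  proof (intro conjI)
    have "emb (sig (V i) (\<lambda>t. cnj (V j t))) = emb (if i = j then 1 else 0)"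
      using rel that dV sdV comm_lin_sig by metis
    thus "sig (V i) (\<lambda>t. cnj (V j t)) = (if i = j then 1 else 0)" by (rule emb_inj)
    have "emb (sig (V i) (V j)) = emb 0"
      using rel that dV comm_lin_sig emb_0 by metis
    thus "sig (V i) (V j) = 0" by (rule emb_inj)
    have "comm (st (d i)) (st (d j)) = 0"
      using rel that comm_st[of "d j" "d i"] st_0 by metis
    hence "emb (sig (\<lambda>t. cnj (V i t)) (\<lambda>t. cnj (V j t))) = emb 0"
      using that sdV comm_lin_sig emb_0 by metis
    thus "sig (\<lambda>t. cnj (V i t)) (\<lambda>t. cnj (V j t)) = 0" by (rule emb_inj)
    have "emb (sig (\<lambda>t. cnj (V i t)) (V j)) = comm (st (d i)) (d j)"
      using comm_lin_sig sdV[OF that(1)] dV[OF that(2)] by simp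
    also have "\<dots> = - emb (if j = i then 1 else 0)"
      using rel that comm_antisym by metis
    also have "\<dots> = emb (- (if i = j then 1 else 0))" by (auto simp: emb_neg)
    finally have "emb (sig (\<lambda>t. cnj (V i t)) (V j)) = emb (- (if i = j then 1 else 0))" .
    thus "sig (\<lambda>t. cnj (V i t)) (V j) = - (if i = j then 1 else 0)" by (rule emb_inj)
  qed
  show ?thesis using ev gram by blast
qed

lemma Sy_carrier: "sigma_y n \<in> carrier_mat (2*n) (2*n)"
  unfolding sigma_y_def by simp
lemma Mc_carrier: "coeff_matrix n \<mu> \<kappa> \<gamma> \<in> carrier_mat (2*n) (2*n)"
  unfolding coeff_matrix_def by simp
lemma Sy_idx: "r < 2*n \<Longrightarrow> s < 2*n \<Longrightarrow> sigma_y n $$ (r, s) = sy r s"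
  unfolding sigma_y_def sy_def by simp
lemma Mc_idx: "r < 2*n \<Longrightarrow> s < 2*n \<Longrightarrow> coeff_matrix n \<mu> \<kappa> \<gamma> $$ (r, s) = of_real (Mr \<mu> \<kappa> \<gamma> r s)"
  unfolding coeff_matrix_def Mr_def by simp

lemma tau_mat: assumes "s < 2*n" shows "tau w s = (sigma_y n *\<^sub>v vec (2*n) w) $ s"
  using assms Sy_carrier unfolding tau_def by (simp add: scalar_prod_def Sy_idx)

lemma sig_mat: "sig x y = vec (2*n) x \<bullet> (sigma_y n *\<^sub>v vec (2*n) y)"
  unfolding sig_def scalar_prod_def using Sy_carrier by (simp add: tau_mat)

lemma Mtau_mat: assumes "r < 2*n"
  shows "(\<Sum>s\<in>{0..<2*n}. of_real (Mr \<mu> \<kappa> \<gamma> r s) * tau w s) =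
    ((coeff_matrix n \<mu> \<kappa> \<gamma> * sigma_y n) *\<^sub>v vec (2*n) w) $ r"
proof -
  have assoc: "((coeff_matrix n \<mu> \<kappa> \<gamma> * sigma_y n) *\<^sub>v vec (2*n) w) =
    coeff_matrix n \<mu> \<kappa> \<gamma> *\<^sub>v (sigma_y n *\<^sub>v vec (2*n) w)"
    using Sy_carrier Mc_carrier by (simp add: assoc_mult_mat_vec[of _ "2*n" "2*n" _ "2*n"])
  define u where "u = sigma_y n *\<^sub>v vec (2*n) w"
  have u: "u \<in> carrier_vec (2*n)" unfolding u_def using Sy_carrier by simp
  have Mc: "dim_row (coeff_matrix n \<mu> \<kappa> \<gamma>) = 2*n" "dim_col (coeff_matrix n \<mu> \<kappa> \<gamma>) = 2*n"
    using Mc_carrier[of \<mu> \<kappa> \<gamma>] by auto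
  have "(coeff_matrix n \<mu> \<kappa> \<gamma> *\<^sub>v u) $ r = (\<Sum>s\<in>{0..<2*n}. coeff_matrix n \<mu> \<kappa> \<gamma> $$ (r, s) * u $ s)"
    using assms u Mc by (simp add: scalar_prod_def)
  also have "\<dots> = (\<Sum>s\<in>{0..<2*n}. of_real (Mr \<mu> \<kappa> \<gamma> r s) * tau w s)"
    using assms by (intro sum.cong refl) (simp add: Mc_idx tau_mat u_def)
  finally show ?thesis unfolding u_def assoc by simp
qed

lemma SySy: "sigma_y n * sigma_y n = 1\<^sub>m (2*n)"
proof (rule eq_matI)
  fix r s assume "r < dim_row (1\<^sub>m (2 * n))" "s < dim_col (1\<^sub>m (2 * n))"
  hence r: "r < 2*n" and s: "s < 2*n" by auto
  have d: "dim_row (sigma_y n) = 2*n" "dim_col (sigma_y n) = 2*n" using Sy_carrier by auto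
  have "(sigma_y n * sigma_y n) $$ (r, s) = (\<Sum>t\<in>{0..<2*n}. sigma_y n $$ (r, t) * sigma_y n $$ (t, s))"
    using r s d by (simp add: scalar_prod_def)
  also have "\<dots> = tau (\<lambda>t. sy t s) r"
    unfolding tau_def using r s by (intro sum.cong refl) (simp add: Sy_idx)
  also have "\<dots> = (if r < n then - \<i> * sy (r + n) s else \<i> * sy (r - n) s)"
    by (rule tau_eval[OF r])
  also have "\<dots> = 1\<^sub>m (2*n) $$ (r, s)"
  proof (cases "r < n")
    case True
    have "sy (r + n) s = (if s = r then \<i> else 0)" using True s unfolding sy_def by auto
    thus ?thesis using True r s by simp
  next
    case False
    have "sy (r - n) s = (if s = r then - \<i> else 0)" using False r s unfolding sy_def by auto
    thus ?thesis using False r s by simp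
  qed
  finally show "(sigma_y n * sigma_y n) $$ (r, s) = 1\<^sub>m (2*n) $$ (r, s)" .
qed (use Sy_carrier in auto)

end

lemma mat_part:
  fixes S Mc :: "complex mat" and c :: "nat \<Rightarrow> complex vec" and lam :: "nat \<Rightarrow> complex" and n :: nat
  assumes S: "S \<in> carrier_mat (2*n) (2*n)" and Mc: "Mc \<in> carrier_mat (2*n) (2*n)" and SS: "S * S = 1\<^sub>m (2*n)"
    and c: "\<And>m. m < 2*n \<Longrightarrow> c m \<in> carrier_vec (2*n)"
    and eig: "\<And>m. m < 2*n \<Longrightarrow> (Mc * S) *\<^sub>v c m = lam m \<cdot>\<^sub>v c m"
    and gram: "\<And>a b. a < 2*n \<Longrightarrow> b < 2*n \<Longrightarrow> c a \<bullet> (S *\<^sub>v c b) =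
        (if a < n \<and> b = a + n then 1 else if n \<le> a \<and> b = a - n then -1 else 0)"
    and real: "\<And>m. m < 2*n \<Longrightarrow> lam m \<in> \<real>"
  shows "phys_diagonalizable (S * Mc)"
proof -
  define N where "N = 2*n"
  have S: "S \<in> carrier_mat N N" and Mc: "Mc \<in> carrier_mat N N" and SS: "S * S = 1\<^sub>m N"
    using assms unfolding N_def by auto
  have c: "\<And>m. m < N \<Longrightarrow> c m \<in> carrier_vec N" using c unfolding N_def by auto
  define A where "A = Mc * S"
  have A: "A \<in> carrier_mat N N" unfolding A_def using S Mc by auto
  define P where "P = mat N N (\<lambda>(r, m). c m $ r)"
  define Lam where "Lam = mat N N (\<lambda>(i, j). if i = j then lam i else 0)"
  define pa where "pa a = (if a < n then a + n else a - n)" for a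
  define sg where "sg a = (if a < n then -1 else (1::complex))" for a
  define G where "G = mat N N (\<lambda>(a, r). sg a * c (pa a) $ r)"
  define Q where "Q = G * S"
  have P: "P \<in> carrier_mat N N" and Lam: "Lam \<in> carrier_mat N N" and G: "G \<in> carrier_mat N N"
    unfolding P_def Lam_def G_def by auto
  have Q: "Q \<in> carrier_mat N N" unfolding Q_def using G S by auto
  have colP: "col P m = c m" if "m < N" for m
    using c[OF that] that unfolding P_def by (intro eq_vecI) auto
  have rowG: "row G a = sg a \<cdot>\<^sub>v c (pa a)" if "a < N" for a
  proof -
    have "pa a < N" using that unfolding pa_def N_def by auto
    thus ?thesis using c[of "pa a"] that unfolding G_def by (intro eq_vecI) auto
  qed
  have QP: "Q * P = 1\<^sub>m N"
  proof (rule eq_matI)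
    fix a b assume ab: "a < dim_row (1\<^sub>m N)" "b < dim_col (1\<^sub>m N)"
    hence a: "a < N" and b: "b < N" by auto
    have pa: "pa a < N" using a unfolding pa_def N_def by auto
    have "(Q * P) $$ (a, b) = (G * (S * P)) $$ (a, b)"
      unfolding Q_def using G S P by simp
    also have "\<dots> = row G a \<bullet> col (S * P) b" using a b G S P by simp
    also have "\<dots> = (sg a \<cdot>\<^sub>v c (pa a)) \<bullet> (S *\<^sub>v c b)"
      using rowG[OF a] colP[OF b] col_mult2[OF S P b] by simp
    also have "\<dots> = sg a * (c (pa a) \<bullet> (S *\<^sub>v c b))"
      using c[OF pa] c[OF b] S by (simp add: smult_scalar_prod_distrib[of _ N])
    also have "\<dots> = (if a = b then 1 else 0)"
      using gram[of "pa a" b] pa b a unfolding N_def pa_def sg_def by auto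
    also have "\<dots> = 1\<^sub>m N $$ (a, b)" using a b by simp
    finally show "(Q * P) $$ (a, b) = 1\<^sub>m N $$ (a, b)" .
  qed (use Q P in auto)
  have PQ: "P * Q = 1\<^sub>m N" by (rule mat_mult_left_right_inverse[OF Q P QP])
  have AP: "A * P = P * Lam"
  proof (rule eq_matI)
    fix r m assume rm: "r < dim_row (P * Lam)" "m < dim_col (P * Lam)"
    hence r: "r < N" and m: "m < N" using P Lam by auto
    have "(P * Lam) $$ (r, m) = (\<Sum>i\<in>{0..<N}. c i $ r * (if i = m then lam i else 0))"
      using r m P Lam unfolding P_def Lam_def by (simp add: scalar_prod_def)
    also have "\<dots> = (\<Sum>i\<in>{0..<N}. if i = m then c m $ r * lam m else 0)"
      by (rule sum.cong) auto
    also have "\<dots> = lam m * c m $ r" using m by simp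
    also have "\<dots> = (A *\<^sub>v c m) $ r" using eig[of m] m r c[OF m] unfolding A_def N_def by simp
    also have "\<dots> = (A * P) $$ (r, m)" using A P r m colP[OF m] by simp
    finally show "(A * P) $$ (r, m) = (P * Lam) $$ (r, m)" by simp
  qed (use A P Lam in auto)
  define P' where "P' = S * P"
  define Q' where "Q' = Q * S"
  have P': "P' \<in> carrier_mat N N" and Q': "Q' \<in> carrier_mat N N"
    unfolding P'_def Q'_def using S P Q by auto
  have Q'P': "Q' * P' = 1\<^sub>m N"
  proof -
    have "Q' * P' = Q * (S * S) * P" unfolding Q'_def P'_def using S P Q by (simp add: assoc_mult_mat[of _ N N _ N _ N])
    also have "\<dots> = 1\<^sub>m N" using SS QP Q by simp
    finally show ?thesis .
  qed
  have P'Q': "P' * Q' = 1\<^sub>m N"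
  proof -
    have "P' * Q' = S * (P * Q) * S" unfolding Q'_def P'_def using S P Q by (simp add: assoc_mult_mat[of _ N N _ N _ N])
    also have "\<dots> = 1\<^sub>m N" using SS PQ S by simp
    finally show ?thesis .
  qed
  have D: "S * Mc = P' * Lam * Q'"
  proof -
    have "P' * Lam * Q' = S * (P * Lam) * Q * S"
      unfolding Q'_def P'_def using S P Q Lam by (simp add: assoc_mult_mat[of _ N N _ N _ N])
    also have "\<dots> = S * A * (P * Q) * S"
      unfolding AP[symmetric] using S P Q A by (simp add: assoc_mult_mat[of _ N N _ N _ N])
    also have "\<dots> = S * Mc * (S * S)"
      unfolding PQ A_def using S Mc by (simp add: assoc_mult_mat[of _ N N _ N _ N])
    also have "\<dots> = S * Mc" using SS S Mc by simp
    finally show ?thesis by simp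
  qed
  have sim: "similar_mat (S * Mc) Lam"
    unfolding similar_mat_def similar_mat_wit_def Let_def
    using D P' Q' P'Q' Q'P' S Mc Lam by (intro exI[of _ P'] exI[of _ Q']) auto
  have diag: "diagonal_mat Lam" unfolding diagonal_mat_def Lam_def by auto
  have LamD: "Lam = Q' * (S * Mc) * P'"
  proof -
    have "Q' * (S * Mc) * P' = (Q' * P') * Lam * (Q' * P')"
      unfolding D using P' Q' Lam by (simp add: assoc_mult_mat[of _ N N _ N _ N])
    thus ?thesis using Q'P' Lam by simp
  qed
  have ev: "k \<in> \<real>" if "eigenvalue (S * Mc) k" for k
  proof -
    from that obtain v where ev: "eigenvector (S * Mc) v k" unfolding eigenvalue_def by auto
    have dr: "dim_row (S * Mc) = N" using S by simp
    have v: "v \<in> carrier_vec N" "v \<noteq> 0\<^sub>v N" "(S * Mc) *\<^sub>v v = k \<cdot>\<^sub>v v"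
      using ev unfolding eigenvector_def dr by auto
    define y where "y = Q' *\<^sub>v v"
    have y: "y \<in> carrier_vec N" unfolding y_def using Q' v by auto
    have "P' *\<^sub>v y = v" unfolding y_def using P' Q' v P'Q' by (simp flip: assoc_mult_mat_vec)
    hence yn: "y \<noteq> 0\<^sub>v N" using v P' by auto
    have "\<exists>r<N. y $ r \<noteq> 0"
    proof (rule ccontr)
      assume "\<not> (\<exists>r<N. y $ r \<noteq> 0)"
      hence "y = 0\<^sub>v N" using y by (intro eq_vecI) auto
      thus False using yn by simp
    qed
    then obtain r where r: "r < N" "y $ r \<noteq> 0" by blast
    have "Lam *\<^sub>v y = Q' *\<^sub>v ((S * Mc) *\<^sub>v (P' *\<^sub>v y))"
      unfolding LamD using Q' P' S Mc y by (simp add: assoc_mult_mat[of _ N N _ N _ N] assoc_mult_mat_vec[of _ N N _ N])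
    also have "\<dots> = Q' *\<^sub>v ((S * Mc) *\<^sub>v v)" using \<open>P' *\<^sub>v y = v\<close> by simp
    also have "\<dots> = k \<cdot>\<^sub>v y" unfolding v(3) y_def using Q' v by (simp add: mult_mat_vec)
    finally have "(Lam *\<^sub>v y) $ r = k * y $ r" using r y by simp
    moreover have "(Lam *\<^sub>v y) $ r = lam r * y $ r"
    proof -
      have "(Lam *\<^sub>v y) $ r = (\<Sum>i\<in>{0..<N}. (if r = i then lam r else 0) * y $ i)"
        using r y unfolding Lam_def by (simp add: scalar_prod_def)
      also have "\<dots> = (\<Sum>i\<in>{0..<N}. (if i = r then lam r * y $ r else 0))"
        by (rule sum.cong) auto
      also have "\<dots> = lam r * y $ r" using r by simp
      finally show ?thesis .
    qed
    ultimately have "k = lam r" using r by simp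
    thus ?thesis using real r unfolding N_def by simp
  qed
  show ?thesis unfolding phys_diagonalizable_def using sim diag ev by blast
qed

theorem proposition8:
  fixes emb :: "complex \<Rightarrow> 'a::ring_1" and st :: "'a \<Rightarrow> 'a"
    and p q :: "nat \<Rightarrow> 'a" and \<mu> \<kappa> \<gamma> :: "nat \<Rightarrow> nat \<Rightarrow> real" and n :: nat
  assumes "star_algebra emb st"
    and "ccr n emb st p q"
    and "\<forall>i<n. \<forall>j<n. \<mu> i j = \<mu> j i"
    and "\<forall>i<n. \<forall>j<n. \<kappa> i j = \<kappa> j i"
    and "dirac_diagonalizable n emb st p q (hamiltonian n emb p q \<mu> \<kappa> \<gamma>)"
  shows "phys_diagonalizable (dynamic_matrix n \<mu> \<kappa> \<gamma>)"
proof -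
  interpret ccr_setup n emb st p q using assms(1,2) by unfold_locales
  from key[OF assms(3,4,5)] obtain V and \<omega> :: "nat \<Rightarrow> real" where
    ev: "\<forall>j<n. \<forall>r<2*n. (\<Sum>s\<in>{0..<2*n}. of_real (Mr \<mu> \<kappa> \<gamma> r s) * tau (V j) s) = - of_real (\<omega> j) * V j r
         \<and> (\<Sum>s\<in>{0..<2*n}. of_real (Mr \<mu> \<kappa> \<gamma> r s) * tau (\<lambda>t. cnj (V j t)) s) = of_real (\<omega> j) * cnj (V j r)"
    and gram: "\<forall>i<n. \<forall>j<n. sig (V i) (\<lambda>t. cnj (V j t)) = (if i = j then 1 else 0)
         \<and> sig (V i) (V j) = 0 \<and> sig (\<lambda>t. cnj (V i t)) (\<lambda>t. cnj (V j t)) = 0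
         \<and> sig (\<lambda>t. cnj (V i t)) (V j) = - (if i = j then 1 else 0)"
    by blast
  define W where "W m = (if m < n then V m else (\<lambda>t. cnj (V (m - n) t)))" for m
  define c where "c m = vec (2*n) (W m)" for m
  define lam where "lam m = (if m < n then - of_real (\<omega> m) else (of_real (\<omega> (m - n)) :: complex))" for m
  show ?thesis unfolding dynamic_matrix_def
  proof (rule mat_part[OF Sy_carrier Mc_carrier SySy])
    fix m assume "m < 2*n" thus "c m \<in> carrier_vec (2*n)" unfolding c_def by simp
  next
    fix m assume m: "m < 2*n"
    show "(coeff_matrix n \<mu> \<kappa> \<gamma> * sigma_y n) *\<^sub>v c m = lam m \<cdot>\<^sub>v c m"
    proof (rule eq_vecI)
      fix r assume "r < dim_vec (lam m \<cdot>\<^sub>v c m)"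
      hence r: "r < 2*n" unfolding c_def by simp
      have "((coeff_matrix n \<mu> \<kappa> \<gamma> * sigma_y n) *\<^sub>v c m) $ r =
        (\<Sum>s\<in>{0..<2*n}. of_real (Mr \<mu> \<kappa> \<gamma> r s) * tau (W m) s)"
        unfolding c_def by (rule Mtau_mat[OF r, symmetric])
      also have "\<dots> = lam m * W m r"
      proof (cases "m < n")
        case True thus ?thesis using ev r unfolding W_def lam_def by simp
      next
        case False
        hence "m - n < n" using m by simp
        thus ?thesis using ev r False unfolding W_def lam_def by simp
      qed
      also have "\<dots> = (lam m \<cdot>\<^sub>v c m) $ r" unfolding c_def using r by simp
      finally show "((coeff_matrix n \<mu> \<kappa> \<gamma> * sigma_y n) *\<^sub>v c m) $ r = (lam m \<cdot>\<^sub>v c m) $ r" .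
    qed (simp add: c_def coeff_matrix_def)
  next
    fix a b assume a: "a < 2*n" and b: "b < 2*n"
    have "c a \<bullet> (sigma_y n *\<^sub>v c b) = sig (W a) (W b)" unfolding c_def sig_mat ..
    also have "\<dots> = (if a < n \<and> b = a + n then 1 else if n \<le> a \<and> b = a - n then -1 else 0)"
    proof (cases "a < n")
      case True
      show ?thesis
      proof (cases "b < n")
        case True
        thus ?thesis using gram \<open>a < n\<close> unfolding W_def by auto
      next
        case False
        hence "b - n < n" using b by simp
        thus ?thesis using gram \<open>a < n\<close> False unfolding W_def by auto
      qed
    next
      case False
      hence a': "a - n < n" using a by simp
      show ?thesis
      proof (cases "b < n")
        case True
        thus ?thesis using gram a' False unfolding W_def by auto
      next
        case False
        hence "b - n < n" using b by simp
        thus ?thesis using gram a' False \<open>\<not> a < n\<close> unfolding W_def by auto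
      qed
    qed
    finally show "c a \<bullet> (sigma_y n *\<^sub>v c b) = (if a < n \<and> b = a + n then 1 else if n \<le> a \<and> b = a - n then -1 else 0)" .
  next
    fix m assume "m < 2*n" thus "lam m \<in> \<real>" unfolding lam_def by auto
  qed
qed

end
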